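(* Let $k\ge 1$ and let $v_0,\pi_1,v_1,\dots,\pi_k$ be generated by Approximate Value Iteration with errors $\epsilon_1,\dots,\epsilon_{k-1}$ (for any choice of greedy policies at each step). Let $\epsilon=\max_{1\le j<k}\operatorname{span}(\epsilon_j)$ (with $\epsilon=0$ if $k=1$). Then $$\|v_*-v_{\pi_k}\|_\infty \le \frac{1}{1-\gamma}\left(\frac{\gamma-\gamma^k}{1-\gamma}\,\epsilon+\gamma^k\operatorname{span}(v_*-v_0)\right).$$
   Context: A Markov Decision Process with finite state space $S$, finite action space $A$, reward function $r(s,a)$, transition probabilities $p(s'|s,a)$ and discount factor $\gamma\in[0,1)$. For a (deterministic, stationary) policy $\pi:S\to A$, let $r_\pi(s)=r(s,\pi(s))$, let $P_\pi$ be the stochastic matrix $P_\pi(s,s')=p(s'|s,\pi(s))$, and let $T_\pi v=r_\pi+\gamma P_\pi v$ be the Bellman operator of $\pi$; $v_\pi$ is its unique fixed point (the expected $\gamma$-discounted total reward of $\pi$). The Bellman optimality operator is $Tv=\max_\pi T_\pi v$ (componentwise), $v_*$ is its fixed point (the optimal value), and a policy $\pi$ is greedy with respect to $v$ if $T_\pi v=Tv$. For a function $f:S\to\mathbb R$, $\operatorname{span}(f)=\max_s f(s)-\min_s f(s)$. Approximate Value Iteration: starting from an arbitrary $v_0:S\to\mathbb R$, for $j\ge 0$ pick any policy $\pi_{j+1}$ greedy with respect to $v_j$ and set $v_{j+1}=T_{\pi_{j+1}}v_j+\epsilon_{j+1}$, where $\epsilon_{j+1}:S\to\mathbb R$ are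 arbitrary error terms. *)

theory Defs
  imports Complex_Main
begin

text \<open>Finite MDP: states 's::finite, actions 'a::finite, reward r s a,
transition probabilities p s a s' = p(s'|s,a), discount factor g.\<close>

definition valid_mdp :: "('s::finite \<Rightarrow> 'a::finite \<Rightarrow> 's \<Rightarrow> real) \<Rightarrow> real \<Rightarrow> bool" where
  "valid_mdp p g \<longleftrightarrow> (\<forall>s a s'. 0 \<le> p s a s') \<and> (\<forall>s a. (\<Sum>s'\<in>UNIV. p s a s') = 1)
     \<and> 0 \<le> g \<and> g < 1"

definition T_pol :: "('s::finite \<Rightarrow> 'a \<Rightarrow> real) \<Rightarrow> ('s \<Rightarrow> 'a \<Rightarrow> 's \<Rightarrow> real) \<Rightarrow> real
    \<Rightarrow> ('s \<Rightarrow> 'a) \<Rightarrow> ('s \<Rightarrow> real) \<Rightarrow> 's \<Rightarrow> real" where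
  "T_pol r p g pol v s = r s (pol s) + g * (\<Sum>s'\<in>UNIV. p s (pol s) s' * v s')"

definition v_pol :: "('s::finite \<Rightarrow> 'a \<Rightarrow> real) \<Rightarrow> ('s \<Rightarrow> 'a \<Rightarrow> 's \<Rightarrow> real) \<Rightarrow> real
    \<Rightarrow> ('s \<Rightarrow> 'a) \<Rightarrow> 's \<Rightarrow> real" where
  "v_pol r p g pol = (THE v. T_pol r p g pol v = v)"

definition T_opt :: "('s::finite \<Rightarrow> 'a::finite \<Rightarrow> real) \<Rightarrow> ('s \<Rightarrow> 'a \<Rightarrow> 's \<Rightarrow> real) \<Rightarrow> real
    \<Rightarrow> ('s \<Rightarrow> real) \<Rightarrow> 's \<Rightarrow> real" where
  "T_opt r p g v s = Max (range (\<lambda>pol. T_pol r p g pol v s))"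

definition v_opt :: "('s::finite \<Rightarrow> 'a::finite \<Rightarrow> real) \<Rightarrow> ('s \<Rightarrow> 'a \<Rightarrow> 's \<Rightarrow> real) \<Rightarrow> real
    \<Rightarrow> 's \<Rightarrow> real" where
  "v_opt r p g = (THE v. T_opt r p g v = v)"

definition greedy :: "('s::finite \<Rightarrow> 'a::finite \<Rightarrow> real) \<Rightarrow> ('s \<Rightarrow> 'a \<Rightarrow> 's \<Rightarrow> real) \<Rightarrow> real
    \<Rightarrow> ('s \<Rightarrow> 'a) \<Rightarrow> ('s \<Rightarrow> real) \<Rightarrow> bool" where
  "greedy r p g pol v \<longleftrightarrow> T_pol r p g pol v = T_opt r p g v"

definition fspan :: "('s::finite \<Rightarrow> real) \<Rightarrow> real" where
  "fspan f = Max (range f) - Min (range f)"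

definition supnorm :: "('s::finite \<Rightarrow> real) \<Rightarrow> real" where
  "supnorm f = Max (range (\<lambda>s. \<bar>f s\<bar>))"

end

theory Submission imports Defs begin

lemma Max_ge_r: "f s \<le> Max (range (f::'s::finite \<Rightarrow> real))"
  by (rule Max_ge) auto
lemma Max_le_r: "(\<And>s. f s \<le> B) \<Longrightarrow> Max (range (f::'s::finite \<Rightarrow> real)) \<le> B"
  by (subst Max_le_iff) auto
lemma Min_le_r: "Min (range (f::'s::finite \<Rightarrow> real)) \<le> f s"
  by (rule Min_le) auto
lemma Min_ge_r: "(\<And>s. B \<le> f s) \<Longrightarrow> B \<le> Min (range (f::'s::finite \<Rightarrow> real))"
  by (subst Min_ge_iff) auto
lemma Max_in_r: "\<exists>s. Max (range (f::'s::finite \<Rightarrow> real)) = f s"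
proof -
  have "Max (range f) \<in> range f" by (rule Max_in) auto
  then show ?thesis by (metis rangeE)
qed
lemma Min_in_r: "\<exists>s. Min (range (f::'s::finite \<Rightarrow> real)) = f s"
proof -
  have "Min (range f) \<in> range f" by (rule Min_in) auto
  then show ?thesis by (metis rangeE)
qed

lemma avg_le:
  assumes "valid_mdp p g" shows "(\<Sum>s'\<in>UNIV. p s a s' * f s') \<le> Max (range f)"
proof -
  have "(\<Sum>s'\<in>UNIV. p s a s' * f s') \<le> (\<Sum>s'\<in>UNIV. p s a s' * Max (range f))"
    by (rule sum_mono, rule mult_left_mono) (use assms in \<open>auto simp: valid_mdp_def intro: Max_ge_r\<close>)
  also have "\<dots> = Max (range f)" using assms by (simp add: valid_mdp_def flip: sum_distrib_right)
  finally show ?thesis .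
qed

lemma avg_ge:
  assumes "valid_mdp p g" shows "Min (range f) \<le> (\<Sum>s'\<in>UNIV. p s a s' * f s')"
proof -
  have "Min (range f) = (\<Sum>s'\<in>UNIV. p s a s' * Min (range f))"
    using assms by (simp add: valid_mdp_def flip: sum_distrib_right)
  also have "\<dots> \<le> (\<Sum>s'\<in>UNIV. p s a s' * f s')"
    by (rule sum_mono, rule mult_left_mono) (use assms in \<open>auto simp: valid_mdp_def intro: Min_le_r\<close>)
  finally show ?thesis .
qed

lemma T_opt_ge: "T_pol r p g pol v s \<le> T_opt r p g v s"
  unfolding T_opt_def by (rule Max_ge) auto

lemma T_opt_in: "\<exists>pol. T_opt r p g v s = T_pol r p g pol v s"
proof -
  have "T_opt r p g v s \<in> range (\<lambda>pol. T_pol r p g pol v s)"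
    unfolding T_opt_def by (rule Max_in) auto
  then show ?thesis by auto
qed

lemma T_pol_diff: "T_pol r p g pol x s - T_pol r p g pol y s
   = g * (\<Sum>s'\<in>UNIV. p s (pol s) s' * (x s' - y s'))"
  by (simp add: T_pol_def right_diff_distrib sum_subtractf)

lemma T_opt_diff_le:
  assumes "valid_mdp p g"
  shows "T_opt r p g x s - T_opt r p g y s \<le> g * Max (range (\<lambda>s. x s - y s))"
proof -
  obtain pol where e: "T_opt r p g x s = T_pol r p g pol x s" using T_opt_in by blast
  have "T_opt r p g x s - T_opt r p g y s \<le> T_pol r p g pol x s - T_pol r p g pol y s"
    using e T_opt_ge[of r p g pol y s] by linarith
  also have "\<dots> \<le> g * Max (range (\<lambda>s. x s - y s))"
    unfolding T_pol_diff by (rule mult_left_mono[OF avg_le[OF assms]]) (use assms in \<open>simp add: valid_mdp_def\<close>)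
  finally show ?thesis .
qed

lemma T_opt_diff_ge:
  assumes "valid_mdp p g"
  shows "g * Min (range (\<lambda>s. x s - y s)) \<le> T_opt r p g x s - T_opt r p g y s"
proof -
  obtain pol where e: "T_opt r p g y s = T_pol r p g pol y s" using T_opt_in by blast
  have "g * Min (range (\<lambda>s. x s - y s)) \<le> T_pol r p g pol x s - T_pol r p g pol y s"
    unfolding T_pol_diff by (rule mult_left_mono[OF avg_ge[OF assms]]) (use assms in \<open>simp add: valid_mdp_def\<close>)
  also have "\<dots> \<le> T_opt r p g x s - T_opt r p g y s"
    using e T_opt_ge[of r p g pol x s] by linarith
  finally show ?thesis .
qed

lemma contr_gen:
  fixes x y :: "'s::finite \<Rightarrow> real" and p :: "'s \<Rightarrow> 'a::finite \<Rightarrow> 's \<Rightarrow> real"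
  assumes "valid_mdp p g" "\<And>s. \<bar>x s - y s\<bar> \<le> B"
    and "g * Min (range (\<lambda>s. x s - y s)) \<le> d" "d \<le> g * Max (range (\<lambda>s. x s - y s))"
  shows "\<bar>d\<bar> \<le> g * B"
proof -
  have g: "0 \<le> g" using assms(1) by (simp add: valid_mdp_def)
  have "Max (range (\<lambda>s. x s - y s)) \<le> B" by (rule Max_le_r) (use assms(2) abs_le_D1 in blast)
  moreover have "-B \<le> Min (range (\<lambda>s. x s - y s))" by (rule Min_ge_r) (use assms(2) in \<open>metis abs_le_iff minus_diff_eq neg_le_iff_le\<close>)
  ultimately have "g * Max (range (\<lambda>s. x s - y s)) \<le> g * B" "g * (-B) \<le> g * Min (range (\<lambda>s. x s - y s))"
    using g by (simp_all add: mult_left_mono del: mult_minus_right)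
  then show ?thesis using assms(3,4) by auto
qed

lemma contr_opt:
  assumes "valid_mdp p g" "\<And>s. \<bar>x s - y s\<bar> \<le> B"
  shows "\<bar>T_opt r p g x s - T_opt r p g y s\<bar> \<le> g * B"
  by (rule contr_gen[OF assms T_opt_diff_ge[OF assms(1)] T_opt_diff_le[OF assms(1)]])

lemma contr_pol:
  assumes "valid_mdp p g" "\<And>s. \<bar>x s - y s\<bar> \<le> B"
  shows "\<bar>T_pol r p g pol x s - T_pol r p g pol y s\<bar> \<le> g * B"
proof (rule contr_gen[OF assms])
  have g: "0 \<le> g" using assms(1) by (simp add: valid_mdp_def)
  show "g * Min (range (\<lambda>s. x s - y s)) \<le> T_pol r p g pol x s - T_pol r p g pol y s"
    unfolding T_pol_diff by (rule mult_left_mono[OF avg_ge[OF assms(1)] g])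
  show "T_pol r p g pol x s - T_pol r p g pol y s \<le> g * Max (range (\<lambda>s. x s - y s))"
    unfolding T_pol_diff by (rule mult_left_mono[OF avg_le[OF assms(1)] g])
qed


lemma zero_from_geom:
  fixes t K c :: real
  assumes "0 \<le> c" "c < 1" "\<And>n. t \<le> K * c ^ n"
  shows "t \<le> 0"
proof -
  have "(\<lambda>n. K * c ^ n) \<longlonglongrightarrow> K * 0"
    by (intro tendsto_mult tendsto_const LIMSEQ_power_zero) (use assms in auto)
  then have "t \<le> K * 0" by (rule LIMSEQ_le_const) (use assms(3) in auto)
  then show ?thesis by simp
qed

lemma contraction_uniq:
  fixes F :: "('s::finite \<Rightarrow> real) \<Rightarrow> 's \<Rightarrow> real"
  assumes c1: "c < 1"
    and contr: "\<And>x y B s. (\<And>s. \<bar>x s - y s\<bar> \<le> B) \<Longrightarrow> \<bar>F x s - F y s\<bar> \<le> c * B"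
    and w: "F w = w" and v: "F v = v"
  shows "w = v"
proof -
  define B where "B = Max (range (\<lambda>s. \<bar>w s - v s\<bar>))"
  obtain s0 where s0: "B = \<bar>w s0 - v s0\<bar>" unfolding B_def using Max_in_r by blast
  have Bs: "\<bar>w s - v s\<bar> \<le> B" for s unfolding B_def by (rule Max_ge_r)
  have "\<bar>F w s0 - F v s0\<bar> \<le> c * B" by (rule contr) (rule Bs)
  then have "B \<le> c * B" using s0 w v by simp
  then have "(1 - c) * B \<le> 0" by (simp add: algebra_simps)
  moreover have "0 < 1 - c" using c1 by simp
  ultimately have "B \<le> 0" by (simp add: mult_le_0_iff)
  then have "\<And>s. w s = v s" using Bs by (metis abs_le_zero_iff eq_iff_diff_eq_0 order_trans)
  then show "w = v" by auto
qed

lemma contraction_fix: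
  fixes F :: "('s::finite \<Rightarrow> real) \<Rightarrow> 's \<Rightarrow> real"
  assumes c0: "0 \<le> c" and c1: "c < 1"
    and contr: "\<And>x y B s. (\<And>s. \<bar>x s - y s\<bar> \<le> B) \<Longrightarrow> \<bar>F x s - F y s\<bar> \<le> c * B"
  shows "\<exists>!v. F v = v"
proof -
  define x where "x n = (F ^^ n) (\<lambda>_. 0)" for n
  have xS: "x (Suc n) = F (x n)" for n by (simp add: x_def)
  define D where "D = Max (range (\<lambda>s. \<bar>x 1 s - x 0 s\<bar>))"
  have D0: "0 \<le> D" unfolding D_def by (rule order_trans[OF _ Max_ge_r]) auto
  have step: "\<bar>x (Suc n) s - x n s\<bar> \<le> c ^ n * D" for n s
  proof (induction n arbitrary: s)
    case 0 then show ?case unfolding D_def using Max_ge_r[of "\<lambda>s. \<bar>x 1 s - x 0 s\<bar>"] by simp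
  next
    case (Suc n)
    have "\<bar>F (x (Suc n)) s - F (x n) s\<bar> \<le> c * (c ^ n * D)" by (rule contr) (rule Suc)
    then show ?case by (simp add: xS)
  qed
  have cau: "\<bar>x m s - x n s\<bar> \<le> D * (c ^ n - c ^ m) / (1 - c)" if "n \<le> m" for m n s
    using that
  proof (induction m rule: dec_induct)
    case base then show ?case by simp
  next
    case (step m)
    have "\<bar>x (Suc m) s - x n s\<bar> \<le> \<bar>x m s - x n s\<bar> + \<bar>x (Suc m) s - x m s\<bar>" by linarith
    also have "\<dots> \<le> D * (c ^ n - c ^ m) / (1 - c) + c ^ m * D"
      using step.IH \<open>\<And>n s. \<bar>x (Suc n) s - x n s\<bar> \<le> c ^ n * D\<close> by (intro add_mono) auto
    also have "\<dots> = D * (c ^ n - c ^ Suc m) / (1 - c)" using c1 by (simp add: field_simps)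
    finally show ?case .
  qed
  have cau2: "\<bar>x m s - x n s\<bar> \<le> c ^ n * D / (1 - c)" if "n \<le> m" for m n s
  proof -
    have "D * (c ^ n - c ^ m) \<le> c ^ n * D" using D0 c0 by (simp add: algebra_simps)
    then have "D * (c ^ n - c ^ m) / (1 - c) \<le> c ^ n * D / (1 - c)"
      using c1 by (intro divide_right_mono) auto
    then show ?thesis using cau[OF that, of s] by linarith
  qed
  define L where "L s = x 0 s + suminf (\<lambda>i. x (Suc i) s - x i s)" for s
  have conv: "(\<lambda>n. x n s) \<longlonglongrightarrow> L s" for s
  proof -
    have "summable (\<lambda>i. c ^ i * D)"
      by (rule summable_mult2, rule summable_geometric) (use c0 c1 in auto)
    then have sm: "summable (\<lambda>i. x (Suc i) s - x i s)"
      by (rule summable_comparison_test'[where N=0]) (use step in auto)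
    have "(\<lambda>n. x 0 s + (\<Sum>i<n. x (Suc i) s - x i s)) \<longlonglongrightarrow> L s"
      unfolding L_def by (intro tendsto_add tendsto_const summable_LIMSEQ sm)
    moreover have "x 0 s + (\<Sum>i<n. x (Suc i) s - x i s) = x n s" for n
      using sum_lessThan_telescope[of "\<lambda>i. x i s" n] by simp
    ultimately show ?thesis by simp
  qed
  have Lb: "\<bar>L s - x n s\<bar> \<le> c ^ n * D / (1 - c)" for n s
  proof -
    have "(\<lambda>m. \<bar>x m s - x n s\<bar>) \<longlonglongrightarrow> \<bar>L s - x n s\<bar>"
      by (intro tendsto_rabs tendsto_diff conv tendsto_const)
    then show ?thesis by (rule LIMSEQ_le_const2) (use cau2 in auto)
  qed
  have "\<bar>F L s - L s\<bar> \<le> 0" for s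
  proof (rule zero_from_geom[OF c0 c1])
    fix n
    have a: "\<bar>F L s - F (x n) s\<bar> \<le> c * (c ^ n * D / (1 - c))"
      by (rule contr) (use Lb in auto)
    have b: "\<bar>x (Suc n) s - L s\<bar> \<le> c ^ Suc n * D / (1 - c)"
      using Lb[of s "Suc n"] by linarith
    have "\<bar>F L s - L s\<bar> \<le> \<bar>F L s - F (x n) s\<bar> + \<bar>x (Suc n) s - L s\<bar>" by (simp add: xS)
    also have "\<dots> \<le> c * (c ^ n * D / (1 - c)) + c ^ Suc n * D / (1 - c)" using a b by linarith
    also have "\<dots> = (2 * D / (1 - c) * c) * c ^ n" by (simp add: field_simps)
    finally show "\<bar>F L s - L s\<bar> \<le> (2 * D / (1 - c) * c) * c ^ n" .
  qed
  then have FL: "F L = L" by (intro ext) simp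
  show ?thesis
  proof (rule ex1I[of _ L])
    show "F L = L" by (rule FL)
    fix w assume w: "F w = w"
    show "w = L"
    proof (rule contraction_uniq[where F=F and c=c and v=L and w=w])
      show "c < 1" by (rule c1)
      show "F w = w" by (rule w)
      show "F L = L" by (rule FL)
      fix x y :: "'s \<Rightarrow> real" and B s
      assume "\<And>s. \<bar>x s - y s\<bar> \<le> B"
      then show "\<bar>F x s - F y s\<bar> \<le> c * B" by (rule contr)
    qed
  qed
qed


lemma v_pol_fix:
  fixes p :: "'s::finite \<Rightarrow> 'a::finite \<Rightarrow> 's \<Rightarrow> real"
  assumes mdp: "valid_mdp p g"
  shows "T_pol r p g pol (v_pol r p g pol) = v_pol r p g pol"
proof -
  have "\<exists>!v. T_pol r p g pol v = v"
  proof (rule contraction_fix[where c=g])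
    show "0 \<le> g" "g < 1" using mdp by (auto simp: valid_mdp_def)
    fix x y :: "'s \<Rightarrow> real" and B s
    assume "\<And>s. \<bar>x s - y s\<bar> \<le> B"
    then show "\<bar>T_pol r p g pol x s - T_pol r p g pol y s\<bar> \<le> g * B" by (rule contr_pol[OF mdp])
  qed
  then show ?thesis unfolding v_pol_def by (rule theI')
qed

lemma v_opt_fix:
  fixes p :: "'s::finite \<Rightarrow> 'a::finite \<Rightarrow> 's \<Rightarrow> real"
  assumes mdp: "valid_mdp p g"
  shows "T_opt r p g (v_opt r p g) = v_opt r p g"
proof -
  have "\<exists>!v. T_opt r p g v = v"
  proof (rule contraction_fix[where c=g])
    show "0 \<le> g" "g < 1" using mdp by (auto simp: valid_mdp_def)
    fix x y :: "'s \<Rightarrow> real" and B s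
    assume "\<And>s. \<bar>x s - y s\<bar> \<le> B"
    then show "\<bar>T_opt r p g x s - T_opt r p g y s\<bar> \<le> g * B" by (rule contr_opt[OF mdp])
  qed
  then show ?thesis unfolding v_opt_def by (rule theI')
qed

lemma greedy_bound:
  fixes p :: "'s::finite \<Rightarrow> 'a::finite \<Rightarrow> 's \<Rightarrow> real"
  assumes mdp: "valid_mdp p g"
    and vs: "T_opt r p g vs = vs" and vp: "T_pol r p g pol vp = vp"
    and gr: "greedy r p g pol w"
  shows "0 \<le> vs s - vp s \<and> vs s - vp s \<le> g * fspan (\<lambda>s. vs s - w s) / (1 - g)"
proof -
  have g0: "0 \<le> g" and g1: "g < 1" using mdp by (auto simp: valid_mdp_def)
  define y where "y s = vs s - vp s" for s
  define d where "d s = vs s - w s" for s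
  obtain s0 where s0: "Min (range y) = y s0" using Min_in_r by blast
  have "y s0 = T_opt r p g vs s0 - T_pol r p g pol vp s0" unfolding y_def
    using fun_cong[OF vs, of s0] fun_cong[OF vp, of s0] by linarith
  also have "\<dots> \<ge> T_pol r p g pol vs s0 - T_pol r p g pol vp s0" using T_opt_ge[of r p g pol vs s0] by linarith
  finally have A: "y s0 \<ge> g * (\<Sum>s'\<in>UNIV. p s0 (pol s0) s' * y s')"
    unfolding T_pol_diff y_def .
  have B: "g * Min (range y) \<le> g * (\<Sum>s'\<in>UNIV. p s0 (pol s0) s' * y s')"
    by (rule mult_left_mono[OF avg_ge[OF mdp] g0])
  have "Min (range y) \<ge> g * Min (range y)" using s0 A B by linarith
  then have "(1 - g) * Min (range y) \<ge> 0" by (simp add: algebra_simps)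
  then have m0: "Min (range y) \<ge> 0" using g1 by (simp add: zero_le_mult_iff)
  have up: "y s \<le> g * fspan d + g * Max (range y)" for s
  proof -
    obtain sig where e: "T_opt r p g vs s = T_pol r p g sig vs s" using T_opt_in by blast
    have grw: "T_pol r p g pol w s = T_opt r p g w s" using gr unfolding greedy_def by simp
    have "y s = T_pol r p g sig vs s - T_pol r p g pol vp s" unfolding y_def
      using e fun_cong[OF vs, of s] fun_cong[OF vp, of s] by linarith
    also have "\<dots> \<le> (T_pol r p g sig vs s - T_pol r p g sig w s) + (T_pol r p g pol w s - T_pol r p g pol vp s)"
      using grw T_opt_ge[of r p g sig w s] by linarith
    also have "T_pol r p g sig vs s - T_pol r p g sig w s = g * (\<Sum>s'\<in>UNIV. p s (sig s) s' * d s')"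
      unfolding T_pol_diff d_def ..
    also have "T_pol r p g pol w s - T_pol r p g pol vp s
        = g * (\<Sum>s'\<in>UNIV. p s (pol s) s' * y s') - g * (\<Sum>s'\<in>UNIV. p s (pol s) s' * d s')"
      unfolding T_pol_diff y_def d_def by (simp add: right_diff_distrib sum_subtractf algebra_simps)
    finally have "y s \<le> g * ((\<Sum>s'\<in>UNIV. p s (sig s) s' * d s') - (\<Sum>s'\<in>UNIV. p s (pol s) s' * d s'))
        + g * (\<Sum>s'\<in>UNIV. p s (pol s) s' * y s')" by (simp add: algebra_simps)
    also have "\<dots> \<le> g * fspan d + g * Max (range y)"
    proof (intro add_mono mult_left_mono g0)
      show "(\<Sum>s'\<in>UNIV. p s (sig s) s' * d s') - (\<Sum>s'\<in>UNIV. p s (pol s) s' * d s') \<le> fspan d"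
        unfolding fspan_def using avg_le[OF mdp, of s "sig s" d] avg_ge[OF mdp, of d s "pol s"] by linarith
      show "(\<Sum>s'\<in>UNIV. p s (pol s) s' * y s') \<le> Max (range y)" by (rule avg_le[OF mdp])
    qed
    finally show ?thesis .
  qed
  obtain s1 where s1: "Max (range y) = y s1" using Max_in_r by blast
  have "Max (range y) \<le> g * fspan d + g * Max (range y)" using up[of s1] s1 by simp
  then have "(1 - g) * Max (range y) \<le> g * fspan d" by (simp add: algebra_simps)
  then have M: "Max (range y) \<le> g * fspan d / (1 - g)" using g1 by (simp add: field_simps)
  show ?thesis
    using m0 Min_le_r[of y s] Max_ge_r[of y s] M unfolding y_def[symmetric] d_def[symmetric]
    by (simp add: d_def[abs_def])
qed

lemma span_step:
  fixes p :: "'s::finite \<Rightarrow> 'a::finite \<Rightarrow> 's \<Rightarrow> real"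
  assumes mdp: "valid_mdp p g"
    and vs: "T_opt r p g vs = vs"
    and w': "w' = (\<lambda>s. T_opt r p g w s + e s)"
  shows "fspan (\<lambda>s. vs s - w' s) \<le> g * fspan (\<lambda>s. vs s - w s) + fspan e"
proof -
  define d where "d s = vs s - w s" for s
  have eq: "vs s - w' s = (T_opt r p g vs s - T_opt r p g w s) - e s" for s
    using fun_cong[OF vs, of s] by (simp add: w')
  have "Max (range (\<lambda>s. vs s - w' s)) \<le> g * Max (range d) - Min (range e)"
  proof (rule Max_le_r)
    fix s
    show "vs s - w' s \<le> g * Max (range d) - Min (range e)"
      unfolding eq using T_opt_diff_le[OF mdp, where r=r and x=vs and y=w and s=s] Min_le_r[of e s]
      unfolding d_def by linarith
  qed
  moreover have "g * Min (range d) - Max (range e) \<le> Min (range (\<lambda>s. vs s - w' s))"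
  proof (rule Min_ge_r)
    fix s
    show "g * Min (range d) - Max (range e) \<le> vs s - w' s"
      unfolding eq using T_opt_diff_ge[OF mdp, where r=r and x=vs and y=w and s=s] Max_ge_r[of e s]
      unfolding d_def by linarith
  qed
  ultimately show ?thesis unfolding fspan_def d_def[abs_def] by (simp add: algebra_simps)
qed

theorem theorem1:
  fixes r :: "'s::finite \<Rightarrow> 'a::finite \<Rightarrow> real"
    and p :: "'s \<Rightarrow> 'a \<Rightarrow> 's \<Rightarrow> real"
    and g :: real
    and v :: "nat \<Rightarrow> 's \<Rightarrow> real"
    and pol :: "nat \<Rightarrow> 's \<Rightarrow> 'a"
    and err :: "nat \<Rightarrow> 's \<Rightarrow> real"
    and k :: nat
  assumes mdp: "valid_mdp p g"
    and k: "1 \<le> k"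
    and greedy_steps: "\<forall>j<k. greedy r p g (pol (Suc j)) (v j)"
    and updates: "\<forall>j. Suc j < k \<longrightarrow> v (Suc j) = (\<lambda>s. T_pol r p g (pol (Suc j)) (v j) s + err (Suc j) s)"
  shows "supnorm (\<lambda>s. v_opt r p g s - v_pol r p g (pol k) s)
     \<le> 1 / (1 - g) * ((g - g ^ k) / (1 - g)
          * (if k = 1 then 0 else Max ((\<lambda>j. fspan (err j)) ` {1..<k}))
        + g ^ k * fspan (\<lambda>s. v_opt r p g s - v 0 s))"
proof -
  have g0: "0 \<le> g" and g1: "g < 1" using mdp by (auto simp: valid_mdp_def)
  define vs where "vs = v_opt r p g"
  have vsfix: "T_opt r p g vs = vs" unfolding vs_def by (rule v_opt_fix[OF mdp])
  define E where "E = (if k = 1 then 0 else Max ((\<lambda>j. fspan (err j)) ` {1..<k}))"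
  define S0 where "S0 = fspan (\<lambda>s. vs s - v 0 s)"
  have errE: "fspan (err (Suc j)) \<le> E" if "Suc j < k" for j
  proof -
    have "k \<noteq> 1" using that by simp
    moreover have "fspan (err (Suc j)) \<le> Max ((\<lambda>j. fspan (err j)) ` {1..<k})"
      by (rule Max_ge) (use that in auto)
    ultimately show ?thesis unfolding E_def by simp
  qed
  have H: "fspan (\<lambda>s. vs s - v j s) \<le> g ^ j * S0 + E * (1 - g ^ j) / (1 - g)" if "j < k" for j
    using that
  proof (induction j)
    case 0 then show ?case by (simp add: S0_def)
  next
    case (Suc j)
    have gr: "T_pol r p g (pol (Suc j)) (v j) = T_opt r p g (v j)"
      using greedy_steps Suc.prems unfolding greedy_def by simp
    have upd: "v (Suc j) = (\<lambda>s. T_opt r p g (v j) s + err (Suc j) s)"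
      using updates Suc.prems gr by simp
    have "fspan (\<lambda>s. vs s - v (Suc j) s) \<le> g * fspan (\<lambda>s. vs s - v j s) + fspan (err (Suc j))"
      by (rule span_step[OF mdp vsfix upd])
    also have "\<dots> \<le> g * (g ^ j * S0 + E * (1 - g ^ j) / (1 - g)) + E"
      using Suc.IH Suc.prems errE[OF Suc.prems] g0 by (intro add_mono mult_left_mono) auto
    also have "\<dots> = g ^ Suc j * S0 + E * (1 - g ^ Suc j) / (1 - g)"
      using g1 by (simp add: field_simps)
    finally show ?case .
  qed
  obtain m where km: "k = Suc m" using k by (cases k) auto
  have grk: "greedy r p g (pol k) (v m)" using greedy_steps km by simp
  have Hm: "fspan (\<lambda>s. vs s - v m s) \<le> g ^ m * S0 + E * (1 - g ^ m) / (1 - g)"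
    using H km by simp
  define R where "R = g * (g ^ m * S0 + E * (1 - g ^ m) / (1 - g)) / (1 - g)"
  have R: "R = 1 / (1 - g) * ((g - g ^ k) / (1 - g) * E + g ^ k * S0)"
    unfolding R_def km using g1 by (simp add: field_simps)
  have "\<bar>vs s - v_pol r p g (pol k) s\<bar> \<le> R" for s
  proof -
    have b: "0 \<le> vs s - v_pol r p g (pol k) s \<and> vs s - v_pol r p g (pol k) s \<le> g * fspan (\<lambda>s. vs s - v m s) / (1 - g)"
      by (rule greedy_bound[OF mdp vsfix v_pol_fix[OF mdp] grk])
    have "g * fspan (\<lambda>s. vs s - v m s) / (1 - g) \<le> R"
      unfolding R_def using Hm g0 g1 by (intro divide_right_mono mult_left_mono) auto
    then show ?thesis using b by linarith
  qed
  then have "supnorm (\<lambda>s. vs s - v_pol r p g (pol k) s) \<le> R"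
    unfolding supnorm_def by (intro Max_le_r)
  then show ?thesis unfolding R E_def S0_def vs_def .
qed

end
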